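(* Let $A\in\{\mathbb Z,\mathbb R\}$ and $\Delta_2=\mathrm{conv}(\mathbf 0,e_1,e_2)$. Up to $A$-unimodular transformations there is exactly one unbounded two-dimensional closed convex set $C\subset\mathbb R^2$ which is $A$-$\Delta_2$-free and inclusion-maximal among $A$-$\Delta_2$-free closed convex sets, namely $C=[-1,1]\times\mathbb R$ if $A=\mathbb Z$ and $C=[0,1]\times\mathbb R$ if $A=\mathbb R$. In particular its lattice width is $2$ if $A=\mathbb Z$ and $1$ if $A=\mathbb R$.
   Context: An $A$-unimodular transformation is a map $T(x)=Mx+b$ with $M\in \mathrm{GL}_2(\mathbb Z)$ and $b\in A^2$; an $A$-unimodular copy of $X$ is $T(X)$. A convex set is $A$-$X$-free if its relative interior contains no $A$-unimodular copy of $X$. Lattice width: $\mathrm{width}(K)=\inf_{u\in(\mathbb Z^2)^*\setminus\{0\}}\sup_{x,y\in K}|u(x)-u(y)|$. *)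

theory Defs
  imports "HOL-Analysis.Analysis"
begin

text \<open>The parameter A is a set of reals: either \<int> (Ints) or UNIV (= \<real>).\<close>

definition unimodular_map :: "real set \<Rightarrow> (real^2 \<Rightarrow> real^2) \<Rightarrow> bool" where
  "unimodular_map A T \<longleftrightarrow>
     (\<exists>M::real^2^2. \<exists>b::real^2. (\<forall>i j. M $ i $ j \<in> \<int>) \<and> \<bar>det M\<bar> = 1 \<and>
        (\<forall>i. b $ i \<in> A) \<and> T = (\<lambda>x. M *v x + b))"

definition Delta2 :: "(real^2) set" where
  "Delta2 = convex hull {0, axis 1 1, axis 2 1}"

definition free :: "real set \<Rightarrow> (real^2) set \<Rightarrow> (real^2) set \<Rightarrow> bool" where
  "free A X K \<longleftrightarrow> \<not> (\<exists>T. unimodular_map A T \<and> T ` X \<subseteq> rel_interior K)"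

definition maximal_free :: "real set \<Rightarrow> (real^2) set \<Rightarrow> (real^2) set \<Rightarrow> bool" where
  "maximal_free A X K \<longleftrightarrow> closed K \<and> convex K \<and> free A X K \<and>
     (\<forall>K'. closed K' \<and> convex K' \<and> free A X K' \<and> K \<subseteq> K' \<longrightarrow> K' = K)"

definition lattice_width :: "(real^2) set \<Rightarrow> ereal" where
  "lattice_width K = (INF u\<in>{u::real^2. (\<forall>i. u $ i \<in> \<int>) \<and> u \<noteq> 0}.
       SUP p\<in>K \<times> K. ereal \<bar>u \<bullet> fst p - u \<bullet> snd p\<bar>)"

end

theory Submission
  imports Defs "HOL-Analysis.Kronecker_Approximation_Theorem"
begin


lemma A_props:
  assumes "A = \<int> \<or> A = UNIV"
  shows A_int: "k \<in> \<int> \<Longrightarrow> k \<in> A"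
    and A_add: "x \<in> A \<Longrightarrow> y \<in> A \<Longrightarrow> x + y \<in> A"
    and A_mul: "k \<in> \<int> \<Longrightarrow> x \<in> A \<Longrightarrow> k * x \<in> A"
    and A_neg: "x \<in> A \<Longrightarrow> - x \<in> A"
  using assms by auto

lemma mv2_1: "((M::real^2^2) *v x) $ 1 = M$1$1 * x$1 + M$1$2 * x$2"
  by (simp add: matrix_vector_mult_def sum_2)
lemma mv2_2: "((M::real^2^2) *v x) $ 2 = M$2$1 * x$1 + M$2$2 * x$2"
  by (simp add: matrix_vector_mult_def sum_2)
lemma mm2: "((M::real^2^2) ** N) $ i $ j = M$i$1 * N$1$j + M$i$2 * N$2$j"
  by (simp add: matrix_matrix_mult_def sum_2)

lemma um_comp:
  assumes AA: "A = \<int> \<or> A = UNIV" and "unimodular_map A T" "unimodular_map A T'"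
  shows "unimodular_map A (T' \<circ> T)"
proof -
  obtain M b where M: "\<forall>i j. M $ i $ j \<in> \<int>" "\<bar>det M\<bar> = 1" "\<forall>i. b $ i \<in> A" "T = (\<lambda>x. M *v x + b)"
    using assms(2) unfolding unimodular_map_def by blast
  obtain M' b' where M': "\<forall>i j. M' $ i $ j \<in> \<int>" "\<bar>det M'\<bar> = 1" "\<forall>i. b' $ i \<in> A" "T' = (\<lambda>x. M' *v x + b')"
    using assms(3) unfolding unimodular_map_def by blast
  have "\<forall>i j. (M' ** M) $ i $ j \<in> \<int>"
    using M(1) M'(1) by (simp add: mm2)
  moreover have "\<bar>det (M' ** M)\<bar> = 1" using M(2) M'(2) by (simp add: det_mul abs_mult)
  moreover have "\<forall>i. (M' *v b + b') $ i \<in> A"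
  proof
    fix i :: 2
    have "(M' *v b) $ i = M'$i$1 * b$1 + M'$i$2 * b$2"
      by (simp add: matrix_vector_mult_def sum_2)
    also have "\<dots> \<in> A" using M(3) M'(1) A_props[OF AA] by auto
    finally show "(M' *v b + b') $ i \<in> A" using M'(3) A_props[OF AA] by auto
  qed
  moreover have "T' \<circ> T = (\<lambda>x. (M' ** M) *v x + (M' *v b + b'))"
    using M(4) M'(4) by (auto simp: fun_eq_iff matrix_vector_right_distrib matrix_vector_mul_assoc)
  ultimately show ?thesis unfolding unimodular_map_def by blast
qed

lemma um_inv:
  assumes AA: "A = \<int> \<or> A = UNIV" and "unimodular_map A T"
  obtains S where "unimodular_map A S" "\<And>x. S (T x) = x" "\<And>x. T (S x) = x"
proof -
  obtain M b where M: "\<forall>i j. M $ i $ j \<in> \<int>" "\<bar>det M\<bar> = 1" "\<forall>i. b $ i \<in> A" "T = (\<lambda>x. M *v x + b)"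
    using assms(2) unfolding unimodular_map_def by blast
  define e where "e = det M"
  have e2: "e * e = 1" using M(2) unfolding e_def by (metis abs_mult_self_eq mult_1_left)
  have eI: "e \<in> \<int>" using M(1) unfolding e_def det_2 by auto
  define N :: "real^2^2" where "N = vector [vector [e * M$2$2, - e * M$1$2], vector [- e * M$2$1, e * M$1$1]]"
  have N11: "N$1$1 = e * M$2$2" and N12: "N$1$2 = - e * M$1$2" and N21: "N$2$1 = - e * M$2$1" and N22: "N$2$2 = e * M$1$1"
    by (simp_all add: N_def)
  have NI: "\<forall>i j. N $ i $ j \<in> \<int>"
    using M(1) eI by (auto simp: forall_2 N11 N12 N21 N22)
  have NM: "N ** M = mat 1"
    unfolding vec_eq_iff forall_2 mm2 using e2
    by (simp add: N11 N12 N21 N22 mat_def e_def[symmetric] det_2[of M, folded e_def] algebra_simps)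
  have MN: "M ** N = mat 1"
    unfolding vec_eq_iff forall_2 mm2 using e2
    by (simp add: N11 N12 N21 N22 mat_def e_def[symmetric] det_2[of M, folded e_def] algebra_simps)
  have dN: "\<bar>det N\<bar> = 1"
  proof -
    have "det N = e * e * e" unfolding det_2 N11 N12 N21 N22 e_def det_2[of M] by (simp add: algebra_simps)
    then show ?thesis using e2 M(2) e_def by simp
  qed
  define S where "S = (\<lambda>y. N *v y + (- (N *v b)))"
  have "\<forall>i. (- (N *v b)) $ i \<in> A"
  proof
    fix i :: 2
    have "(N *v b) $ i = N$i$1 * b$1 + N$i$2 * b$2"
      by (simp add: matrix_vector_mult_def sum_2)
    also have "\<dots> \<in> A" using M(3) NI A_props[OF AA] by auto
    finally show "(- (N *v b)) $ i \<in> A" using A_props[OF AA] by auto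
  qed
  then have "unimodular_map A S" unfolding unimodular_map_def S_def using NI dN by blast
  moreover have "S (T x) = x" for x
    unfolding S_def M(4) by (simp add: matrix_vector_right_distrib matrix_vector_mul_assoc NM)
  moreover have "T (S x) = x" for x
    unfolding S_def M(4) by (simp add: matrix_vector_right_distrib matrix_vector_mult_diff_distrib matrix_vector_mul_assoc MN)
  ultimately show ?thesis using that by blast
qed



lemma um_form:
  assumes AA: "A = \<int> \<or> A = UNIV" and "unimodular_map A T"
  obtains M b where "linear ((*v) M)" "inj ((*v) (M::real^2^2))" "\<And>K. T ` K = (+) b ` ((*v) M ` K)"
    "T = (\<lambda>x. M *v x + b)"
proof -
  obtain M b where M: "\<forall>i j. M $ i $ j \<in> \<int>" "\<bar>det M\<bar> = 1" "\<forall>i. b $ i \<in> A" "T = (\<lambda>x. M *v x + b)"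
    using assms(2) unfolding unimodular_map_def by blast
  obtain S where S: "\<And>x. S (T x) = x" using um_inv[OF assms] by metis
  have "inj ((*v) M)"
  proof (rule injI)
    fix x y assume "M *v x = M *v y"
    then have "T x = T y" using M(4) by simp
    then show "x = y" using S by metis
  qed
  moreover have "T ` K = (+) b ` ((*v) M ` K)" for K using M(4) by (auto simp: image_image add.commute)
  ultimately show ?thesis using that M(4) matrix_vector_mul_linear by blast
qed

lemma um_relint:
  assumes "A = \<int> \<or> A = UNIV" "unimodular_map A T"
  shows "rel_interior (T ` K) = T ` rel_interior K"
proof -
  obtain M b where M: "linear ((*v) M)" "inj ((*v) (M::real^2^2))" "\<And>K. T ` K = (+) b ` ((*v) M ` K)"
    using um_form[OF assms] by metis
  show ?thesis unfolding M(3)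
    using rel_interior_translation[of b] rel_interior_injective_linear_image[of "(*v) M"] M(1,2)
    by (simp add: linear_conv_bounded_linear)
qed

lemma um_closed:
  assumes "A = \<int> \<or> A = UNIV" "unimodular_map A T" "closed K"
  shows "closed (T ` K)"
proof -
  obtain M b where M: "linear ((*v) M)" "inj ((*v) (M::real^2^2))" "\<And>K. T ` K = (+) b ` ((*v) M ` K)"
    using um_form[OF assms(1,2)] by metis
  show ?thesis unfolding M(3)
    using closed_injective_linear_image[OF assms(3) M(1,2)] closed_translation by blast
qed

lemma um_convex:
  assumes "A = \<int> \<or> A = UNIV" "unimodular_map A T" "convex K"
  shows "convex (T ` K)"
proof -
  obtain M b where M: "linear ((*v) M)" "inj ((*v) (M::real^2^2))" "\<And>K. T ` K = (+) b ` ((*v) M ` K)"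
    using um_form[OF assms(1,2)] by metis
  show ?thesis unfolding M(3)
    using convex_linear_image[OF M(1) assms(3)] convex_translation by blast
qed

lemma um_aff_dim:
  assumes "A = \<int> \<or> A = UNIV" "unimodular_map A T"
  shows "aff_dim (T ` K) = aff_dim K"
proof -
  obtain M b where M: "linear ((*v) M)" "inj ((*v) (M::real^2^2))" "\<And>K. T ` K = (+) b ` ((*v) M ` K)"
    using um_form[OF assms(1,2)] by metis
  show ?thesis unfolding M(3)
    using aff_dim_injective_linear_image[OF M(1,2)] aff_dim_translation_eq by metis
qed

lemma um_bounded:
  assumes "A = \<int> \<or> A = UNIV" "unimodular_map A T" "bounded K"
  shows "bounded (T ` K)"
proof -
  obtain M b where M: "linear ((*v) M)" "inj ((*v) (M::real^2^2))" "\<And>K. T ` K = (+) b ` ((*v) M ` K)"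
    using um_form[OF assms(1,2)] by metis
  show ?thesis unfolding M(3)
    using bounded_linear_image[OF assms(3)] M(1) bounded_translation linear_conv_bounded_linear by metis
qed

lemma um_hull:
  assumes "A = \<int> \<or> A = UNIV" "unimodular_map A T"
  shows "T ` (convex hull X) = convex hull (T ` X)"
proof -
  obtain M b where M: "linear ((*v) M)" "inj ((*v) (M::real^2^2))" "\<And>K. T ` K = (+) b ` ((*v) M ` K)"
    using um_form[OF assms(1,2)] by metis
  show ?thesis unfolding M(3)
    using convex_hull_linear_image[OF M(1)] convex_hull_translation by metis
qed

lemma um_tri:
  assumes "A = \<int> \<or> A = UNIV" "unimodular_map A T" "convex K"
    "T 0 \<in> K" "T (axis 1 1) \<in> K" "T (axis 2 1) \<in> K"
  shows "T ` Delta2 \<subseteq> K"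
  unfolding Delta2_def um_hull[OF assms(1,2)]
  by (rule hull_minimal) (use assms in auto)

lemma um_free:
  assumes AA: "A = \<int> \<or> A = UNIV" and T: "unimodular_map A T" and "free A Delta2 K"
  shows "free A Delta2 (T ` K)"
proof -
  obtain S where S: "unimodular_map A S" "\<And>x. S (T x) = x" "\<And>x. T (S x) = x" using um_inv[OF AA T] by metis
  show ?thesis unfolding free_def
  proof
    assume "\<exists>T2. unimodular_map A T2 \<and> T2 ` Delta2 \<subseteq> rel_interior (T ` K)"
    then obtain T2 where T2: "unimodular_map A T2" "T2 ` Delta2 \<subseteq> T ` rel_interior K"
      using um_relint[OF AA T] by auto
    have "(S \<circ> T2) ` Delta2 \<subseteq> rel_interior K"
      using T2(2) S(2) by (fastforce simp: image_comp[symmetric])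
    moreover have "unimodular_map A (S \<circ> T2)" using um_comp[OF AA T2(1) S(1)] .
    ultimately show False using assms(3) unfolding free_def by blast
  qed
qed

lemma um_maxfree:
  assumes AA: "A = \<int> \<or> A = UNIV" and T: "unimodular_map A T" and mf: "maximal_free A Delta2 K"
  shows "maximal_free A Delta2 (T ` K)"
proof -
  obtain S where S: "unimodular_map A S" "\<And>x. S (T x) = x" "\<And>x. T (S x) = x" using um_inv[OF AA T] by metis
  have K: "closed K" "convex K" "free A Delta2 K"
    and mx: "\<And>K'. closed K' \<Longrightarrow> convex K' \<Longrightarrow> free A Delta2 K' \<Longrightarrow> K \<subseteq> K' \<Longrightarrow> K' = K"
    using mf unfolding maximal_free_def by blast+
  show ?thesis unfolding maximal_free_def
  proof (intro conjI allI impI)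
    show "closed (T ` K)" using um_closed[OF AA T K(1)] .
    show "convex (T ` K)" using um_convex[OF AA T K(2)] .
    show "free A Delta2 (T ` K)" using um_free[OF AA T K(3)] .
    fix K' assume H: "closed K' \<and> convex K' \<and> free A Delta2 K' \<and> T ` K \<subseteq> K'"
    have "S ` K' = K"
      apply (rule mx)
      using H um_closed[OF AA S(1)] um_convex[OF AA S(1)] um_free[OF AA S(1)] S(2)
      by (auto simp: image_subset_iff) (metis image_eqI subsetD image_subset_iff)
    then show "K' = T ` K" using S(3) by (auto simp: image_comp[symmetric]) (metis image_eqI)
  qed
qed



definition strip :: "real \<Rightarrow> real \<Rightarrow> (real^2) set" where
  "strip lo hi = {x. lo \<le> x$1 \<and> x$1 \<le> hi}"

lemma um_mk:
  assumes AA: "A = \<int> \<or> A = UNIV" and "a \<in> \<int>" "b \<in> \<int>" "c \<in> \<int>" "d \<in> \<int>" "\<bar>a*d - b*c\<bar> = 1" "e \<in> A" "f \<in> A"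
  shows "unimodular_map A (\<lambda>x. vector [a * x$1 + b * x$2 + e, c * x$1 + d * x$2 + f])"
  unfolding unimodular_map_def
  apply (rule exI[of _ "vector [vector [a, b], vector [c, d]]"])
  apply (rule exI[of _ "vector [e, f]"])
  using assms by (auto simp: forall_2 det_2 fun_eq_iff vec_eq_iff mv2_1 mv2_2)

lemma um_trans:
  assumes AA: "A = \<int> \<or> A = UNIV" and "e \<in> A" "f \<in> A"
  shows "unimodular_map A (\<lambda>x. x + vector [e, f])"
proof -
  have "(\<lambda>x. x + vector [e, f]) = (\<lambda>x::real^2. vector [1 * x$1 + 0 * x$2 + e, 0 * x$1 + 1 * x$2 + f])"
    by (auto simp: fun_eq_iff vec_eq_iff forall_2)
  then show ?thesis using um_mk[OF AA, of 1 0 0 1 e f] assms by simp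
qed

lemma ax11 [simp]: "(axis 1 1 :: real^2) $ 1 = 1" "(axis 1 1 :: real^2) $ 2 = 0"
  and ax21 [simp]: "(axis 2 1 :: real^2) $ 1 = 0" "(axis 2 1 :: real^2) $ 2 = 1"
  by (simp_all add: axis_def)

lemma Ints_small: "(x::real) \<in> \<int> \<Longrightarrow> \<bar>x\<bar> < 1 \<Longrightarrow> x = 0"
proof -
  assume "x \<in> \<int>" "\<bar>x\<bar> < 1"
  then obtain k where k: "x = of_int k" by (auto elim: Ints_cases)
  then have "\<bar>k\<bar> < 1" using \<open>\<bar>x\<bar> < 1\<close> by linarith
  then show "x = 0" using k by simp
qed

lemma strip_closed: "closed (strip lo hi)"
proof -
  have "strip lo hi = (\<lambda>x. x$1) -` {lo..hi}" by (auto simp: strip_def)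
  then show ?thesis using closed_vimage_vec_nth[of "{lo..hi}" 1] by simp
qed

lemma strip_convex: "convex (strip lo hi)"
proof -
  have "strip lo hi = (\<lambda>x. x$1) -` {lo..hi}" by (auto simp: strip_def)
  moreover have "linear (\<lambda>x::real^2. x$1)" using bounded_linear.linear[OF bounded_linear_vec_nth] .
  ultimately show ?thesis using convex_linear_vimage[of "\<lambda>x::real^2. x$1" "{lo..hi}"] by simp
qed

lemma strip_unbounded: "lo \<le> hi \<Longrightarrow> \<not> bounded (strip lo hi)"
proof
  assume "lo \<le> hi" "bounded (strip lo hi)"
  then obtain B where B: "\<And>x. x \<in> strip lo hi \<Longrightarrow> norm x \<le> B" by (meson bounded_iff)
  have "vector [lo, B + 1] \<in> strip lo hi" using \<open>lo \<le> hi\<close> by (simp add: strip_def)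
  then have "norm (vector [lo, B + 1] :: real^2) \<le> B" by (rule B)
  moreover have "\<bar>(vector [lo, B + 1] :: real^2) $ 2\<bar> \<le> norm (vector [lo, B + 1] :: real^2)"
    by (rule component_le_norm_cart)
  ultimately show False by simp
qed

lemma strip_interior: "lo < x$1 \<Longrightarrow> x$1 < hi \<Longrightarrow> x \<in> interior (strip lo hi)"
  unfolding mem_interior
proof (intro exI conjI)
  assume "lo < x$1" "x$1 < hi"
  show "0 < min (x$1 - lo) (hi - x$1)" using \<open>lo < x$1\<close> \<open>x$1 < hi\<close> by simp
  show "ball x (min (x$1 - lo) (hi - x$1)) \<subseteq> strip lo hi"
  proof
    fix y assume "y \<in> ball x (min (x$1 - lo) (hi - x$1))"
    then have "norm (x - y) < min (x$1 - lo) (hi - x$1)" by (simp add: dist_norm)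
    moreover have "\<bar>(x - y)$1\<bar> \<le> norm (x - y)" by (rule component_le_norm_cart)
    ultimately show "y \<in> strip lo hi" by (auto simp: strip_def)
  qed
qed

lemma strip_interior_ne: "lo < hi \<Longrightarrow> interior (strip lo hi) \<noteq> {}"
  using strip_interior[of lo "vector [(lo+hi)/2, 0]" hi] by auto

lemma strip_aff_dim: "lo < hi \<Longrightarrow> aff_dim (strip lo hi) = 2"
  using aff_dim_nonempty_interior[OF strip_interior_ne] by simp

lemma strip_relint: "lo < hi \<Longrightarrow> x \<in> rel_interior (strip lo hi) \<Longrightarrow> lo < x$1 \<and> x$1 < hi"
proof -
  assume "lo < hi" "x \<in> rel_interior (strip lo hi)"
  then have "x \<in> interior (strip lo hi)" using rel_interior_nonempty_interior[OF strip_interior_ne] by simp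
  then obtain e where e: "e > 0" "ball x e \<subseteq> strip lo hi" by (auto simp: mem_interior)
  have "x + (e/2) *\<^sub>R axis 1 1 \<in> ball x e" "x - (e/2) *\<^sub>R axis 1 1 \<in> ball x e"
    using e(1) by (auto simp: dist_norm)
  then have "x + (e/2) *\<^sub>R axis 1 1 \<in> strip lo hi" "x - (e/2) *\<^sub>R axis 1 1 \<in> strip lo hi"
    using e(2) by auto
  then show ?thesis using e(1) by (auto simp: strip_def)
qed

lemma strip_shift: "(\<lambda>x. x + vector [m, 0]) ` strip lo hi = strip (lo + m) (hi + m)"
proof (rule set_eqI, rule iffI)
  fix x assume "x \<in> (\<lambda>x. x + vector [m, 0]) ` strip lo hi"
  then show "x \<in> strip (lo + m) (hi + m)" by (auto simp: strip_def)
next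
  fix x assume "x \<in> strip (lo + m) (hi + m)"
  then have "x - vector [m, 0] \<in> strip lo hi" "x = (x - vector [m, 0]) + vector [m, 0]"
    by (auto simp: strip_def)
  then show "x \<in> (\<lambda>x. x + vector [m, 0]) ` strip lo hi" by blast
qed

lemma strip_ext:
  assumes "convex K" "strip lo hi \<subseteq> K" "lo < c" "c < hi" "p \<in> K" "p$1 \<noteq> c"
    "0 \<le> (y$1 - c) / (p$1 - c)" "(y$1 - c) / (p$1 - c) < 1"
  shows "y \<in> rel_interior K"
proof -
  define \<mu> where "\<mu> = (y$1 - c) / (p$1 - c)"
  define cc where "cc = (1 / (1 - \<mu>)) *\<^sub>R (y - \<mu> *\<^sub>R p)"
  have m: "0 \<le> \<mu>" "\<mu> < 1" using assms unfolding \<mu>_def by auto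
  have "cc $ 1 = (y$1 - \<mu> * p$1) / (1 - \<mu>)" unfolding cc_def by simp
  also have "\<dots> = c"
  proof -
    have "y$1 - c = \<mu> * (p$1 - c)" using assms(6) unfolding \<mu>_def by simp
    then have "y$1 - \<mu> * p$1 = c * (1 - \<mu>)" by (simp add: algebra_simps)
    then show ?thesis using m by simp
  qed
  finally have "cc \<in> interior (strip lo hi)" using strip_interior assms(3,4) by simp
  then have cc: "cc \<in> interior K" using interior_mono[OF assms(2)] by blast
  have "p - (1 - \<mu>) *\<^sub>R (p - cc) \<in> interior K"
    by (rule mem_interior_convex_shrink[OF assms(1) cc assms(5)]) (use m in auto)
  moreover have "p - (1 - \<mu>) *\<^sub>R (p - cc) = y"
  proof -
    have "(1 - \<mu>) *\<^sub>R cc = y - \<mu> *\<^sub>R p" using m unfolding cc_def by simp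
    then show ?thesis by (simp add: algebra_simps)
  qed
  ultimately show ?thesis using interior_subset_rel_interior by blast
qed



lemma tri_contra:
  assumes AA: "A = \<int> \<or> A = UNIV" and "free A Delta2 K" "convex K" "unimodular_map A T"
    "T 0 \<in> rel_interior K" "T (axis 1 1) \<in> rel_interior K" "T (axis 2 1) \<in> rel_interior K"
  shows False
  using um_tri[OF AA assms(4) convex_rel_interior[OF assms(3)] assms(5-7)] assms(2,4)
  unfolding free_def by blast

lemma um_vertices:
  assumes "unimodular_map A T" "T ` Delta2 \<subseteq> K"
  obtains M b where "\<forall>i j. M $ i $ j \<in> \<int>" "\<bar>det M\<bar> = 1" "\<forall>i. b $ i \<in> A" "T = (\<lambda>x. M *v x + b)"
    "b \<in> K" "M *v axis 1 1 + b \<in> K" "M *v axis 2 1 + b \<in> K"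
proof -
  obtain M b where M: "\<forall>i j. M $ i $ j \<in> \<int>" "\<bar>det M\<bar> = 1" "\<forall>i. b $ i \<in> A" "T = (\<lambda>x. M *v x + b)"
    using assms(1) unfolding unimodular_map_def by blast
  have "0 \<in> Delta2" "axis 1 1 \<in> Delta2" "axis 2 1 \<in> Delta2" unfolding Delta2_def by (auto intro: hull_inc)
  then have "T 0 \<in> K" "T (axis 1 1) \<in> K" "T (axis 2 1) \<in> K" using assms(2) by blast+
  then have "b \<in> K" "M *v axis 1 1 + b \<in> K" "M *v axis 2 1 + b \<in> K" unfolding M(4) by simp_all
  then show ?thesis using that M by blast
qed

lemma strip_free_Z: "free \<int> Delta2 (strip (-1) 1)"
  unfolding free_def
proof
  assume "\<exists>T. unimodular_map \<int> T \<and> T ` Delta2 \<subseteq> rel_interior (strip (-1) 1)"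
  then obtain T where "unimodular_map \<int> T" "T ` Delta2 \<subseteq> rel_interior (strip (-1) 1)" by blast
  then obtain M b where M: "\<forall>i j. M $ i $ j \<in> \<int>" "\<bar>det M\<bar> = 1" "\<forall>i. b $ i \<in> \<int>"
    "b \<in> rel_interior (strip (-1) 1)" "M *v axis 1 1 + b \<in> rel_interior (strip (-1) 1)" "M *v axis 2 1 + b \<in> rel_interior (strip (-1) 1)"
    by (rule um_vertices)
  have e1: "(M *v axis 1 1 + b)$1 = M$1$1 + b$1" and e2: "(M *v axis 2 1 + b)$1 = M$1$2 + b$1"
    by (simp_all add: mv2_1)
  have lt: "-1 < (1::real)" by simp
  have "-1 < b$1 \<and> b$1 < 1" "-1 < M$1$1 + b$1 \<and> M$1$1 + b$1 < 1" "-1 < M$1$2 + b$1 \<and> M$1$2 + b$1 < 1"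
    using strip_relint[OF lt M(4)] strip_relint[OF lt M(5)] strip_relint[OF lt M(6)] unfolding e1 e2 by blast+
  then have "\<bar>b$1\<bar> < 1" "\<bar>M$1$1 + b$1\<bar> < 1" "\<bar>M$1$2 + b$1\<bar> < 1" by auto
  moreover have "b$1 \<in> \<int>" "M$1$1 + b$1 \<in> \<int>" "M$1$2 + b$1 \<in> \<int>" using M(1,3) by auto
  ultimately have "b$1 = 0" "M$1$1 + b$1 = 0" "M$1$2 + b$1 = 0" using Ints_small by blast+
  then show False using M(2) by (simp add: det_2)
qed

lemma strip_free_R: "free UNIV Delta2 (strip 0 1)"
  unfolding free_def
proof
  assume "\<exists>T. unimodular_map UNIV T \<and> T ` Delta2 \<subseteq> rel_interior (strip 0 1)"
  then obtain T where "unimodular_map UNIV T" "T ` Delta2 \<subseteq> rel_interior (strip 0 1)" by blast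
  then obtain M b where M: "\<forall>i j. M $ i $ j \<in> \<int>" "\<bar>det M\<bar> = 1"
    "b \<in> rel_interior (strip 0 1)" "M *v axis 1 1 + b \<in> rel_interior (strip 0 1)" "M *v axis 2 1 + b \<in> rel_interior (strip 0 1)"
    by (rule um_vertices)
  have e1: "(M *v axis 1 1 + b)$1 = M$1$1 + b$1" and e2: "(M *v axis 2 1 + b)$1 = M$1$2 + b$1"
    by (simp_all add: mv2_1)
  have lt: "0 < (1::real)" by simp
  have "0 < b$1 \<and> b$1 < 1" "0 < M$1$1 + b$1 \<and> M$1$1 + b$1 < 1" "0 < M$1$2 + b$1 \<and> M$1$2 + b$1 < 1"
    using strip_relint[OF lt M(3)] strip_relint[OF lt M(4)] strip_relint[OF lt M(5)] unfolding e1 e2 by blast+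
  then have "\<bar>M$1$1\<bar> < 1" "\<bar>M$1$2\<bar> < 1" by auto
  then have "M$1$1 = 0" "M$1$2 = 0" using Ints_small M(1) by blast+
  then show False using M(2) by (simp add: det_2)
qed



lemma strip_max_Z:
  assumes K: "convex K" "free \<int> Delta2 K" "strip (-1) 1 \<subseteq> K"
  shows "K \<subseteq> strip (-1) 1"
proof
  fix p assume p: "p \<in> K"
  show "p \<in> strip (-1) 1"
  proof (rule ccontr)
    assume "p \<notin> strip (-1) 1"
    then have "1 < p$1 \<or> p$1 < -1" by (auto simp: strip_def)
    then show False
    proof
      assume p1: "1 < p$1"
      let ?T = "\<lambda>x::real^2. vector [1 * x$1 + 0 * x$2 + 0, 0 * x$1 + 1 * x$2 + 0] :: real^2"
      have T: "unimodular_map \<int> ?T" by (rule um_mk) auto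
      have "?T 0 \<in> rel_interior K"
        by (rule strip_ext[OF K(1,3) _ _ p, of 0]) (use p1 in auto)
      moreover have "?T (axis 1 1) \<in> rel_interior K"
        by (rule strip_ext[OF K(1,3) _ _ p, of 0]) (use p1 in auto)
      moreover have "?T (axis 2 1) \<in> rel_interior K"
        by (rule strip_ext[OF K(1,3) _ _ p, of 0]) (use p1 in auto)
      ultimately show False using tri_contra[OF _ K(2,1) T] by blast
    next
      assume p1: "p$1 < -1"
      let ?T = "\<lambda>x::real^2. vector [(-1) * x$1 + 0 * x$2 + 0, 0 * x$1 + 1 * x$2 + 0] :: real^2"
      have T: "unimodular_map \<int> ?T" by (rule um_mk) auto
      have "?T 0 \<in> rel_interior K"
        by (rule strip_ext[OF K(1,3) _ _ p, of 0]) (use p1 in auto)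
      moreover have "?T (axis 1 1) \<in> rel_interior K"
        by (rule strip_ext[OF K(1,3) _ _ p, of 0]) (use p1 in \<open>auto simp: field_simps\<close>)
      moreover have "?T (axis 2 1) \<in> rel_interior K"
        by (rule strip_ext[OF K(1,3) _ _ p, of 0]) (use p1 in auto)
      ultimately show False using tri_contra[OF _ K(2,1) T] by blast
    qed
  qed
qed

lemma strip_max_R:
  assumes K: "convex K" "free UNIV Delta2 K" "strip 0 1 \<subseteq> K"
  shows "K \<subseteq> strip 0 1"
proof
  fix p assume p: "p \<in> K"
  show "p \<in> strip 0 1"
  proof (rule ccontr)
    assume "p \<notin> strip 0 1"
    then have "1 < p$1 \<or> p$1 < 0" by (auto simp: strip_def)
    then show False
    proof
      assume p1: "1 < p$1"
      define \<delta> where "\<delta> = (p$1 - 1) / (2 * p$1)"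
      have "0 < (2*p$1 - 1)*(p$1-1)" using p1 by simp
      then have d: "0 < \<delta>" "\<delta> < 1" "\<delta> < p$1 - 1" using p1 unfolding \<delta>_def by (auto simp: field_simps algebra_simps)
      let ?T = "\<lambda>x::real^2. vector [1 * x$1 + 0 * x$2 + \<delta>, 0 * x$1 + 1 * x$2 + 0] :: real^2"
      have T: "unimodular_map UNIV ?T" by (rule um_mk) auto
      have "?T 0 \<in> rel_interior K"
        by (rule strip_ext[OF K(1,3) _ _ p, of \<delta>]) (use p1 d in auto)
      moreover have "?T (axis 1 1) \<in> rel_interior K"
        by (rule strip_ext[OF K(1,3) _ _ p, of \<delta>]) (use p1 d in \<open>auto simp: field_simps\<close>)
      moreover have "?T (axis 2 1) \<in> rel_interior K"
        by (rule strip_ext[OF K(1,3) _ _ p, of \<delta>]) (use p1 d in auto)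
      ultimately show False using tri_contra[OF _ K(2,1) T] by blast
    next
      assume p1: "p$1 < 0"
      define \<delta> where "\<delta> = p$1 / (2 * (1 - p$1))"
      have d: "-1/2 < \<delta>" "\<delta> < 0" "p$1 < \<delta>" using p1 unfolding \<delta>_def by (auto simp: field_simps)
      let ?T = "\<lambda>x::real^2. vector [1 * x$1 + 0 * x$2 + \<delta>, 0 * x$1 + 1 * x$2 + 0] :: real^2"
      have T: "unimodular_map UNIV ?T" by (rule um_mk) auto
      have "?T 0 \<in> rel_interior K"
        by (rule strip_ext[OF K(1,3) _ _ p, of "1 + \<delta>"]) (use p1 d in \<open>auto simp: field_simps\<close>)
      moreover have "?T (axis 1 1) \<in> rel_interior K"
        by (rule strip_ext[OF K(1,3) _ _ p, of "1 + \<delta>"]) (use p1 d in auto)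
      moreover have "?T (axis 2 1) \<in> rel_interior K"
        by (rule strip_ext[OF K(1,3) _ _ p, of "1 + \<delta>"]) (use p1 d in \<open>auto simp: field_simps\<close>)
      ultimately show False using tri_contra[OF _ K(2,1) T] by blast
    qed
  qed
qed

lemma strip_maxfree_Z: "maximal_free \<int> Delta2 (strip (-1) 1)"
  unfolding maximal_free_def using strip_closed strip_convex strip_free_Z strip_max_Z by blast

lemma strip_maxfree_R: "maximal_free UNIV Delta2 (strip 0 1)"
  unfolding maximal_free_def using strip_closed strip_convex strip_free_R strip_max_R by blast



lemma inner2: "(u::real^2) \<bullet> x = u$1 * x$1 + u$2 * x$2"
  by (simp add: inner_vec_def sum_2)

lemma Ints_ge1: "(x::real) \<in> \<int> \<Longrightarrow> x \<noteq> 0 \<Longrightarrow> 1 \<le> \<bar>x\<bar>"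
  using Ints_small by fastforce

lemma strip_width:
  assumes "lo \<le> hi"
  shows "lattice_width (strip lo hi) = ereal (hi - lo)"
  unfolding lattice_width_def
proof (rule antisym)
  let ?U = "{u::real^2. (\<forall>i. u $ i \<in> \<int>) \<and> u \<noteq> 0}"
  have u0: "(vector [1, 0] :: real^2) \<in> ?U" by (auto simp: forall_2 vec_eq_iff)
  show "(INF u\<in>?U. SUP p\<in>strip lo hi \<times> strip lo hi. ereal \<bar>u \<bullet> fst p - u \<bullet> snd p\<bar>) \<le> ereal (hi - lo)"
  proof (rule INF_lower2[OF u0], rule SUP_least)
    fix p assume "p \<in> strip lo hi \<times> strip lo hi"
    then show "ereal \<bar>(vector [1, 0] :: real^2) \<bullet> fst p - vector [1, 0] \<bullet> snd p\<bar> \<le> ereal (hi - lo)"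
      by (auto simp: inner2 strip_def)
  qed
  show "ereal (hi - lo) \<le> (INF u\<in>?U. SUP p\<in>strip lo hi \<times> strip lo hi. ereal \<bar>u \<bullet> fst p - u \<bullet> snd p\<bar>)"
  proof (rule INF_greatest)
    fix u assume u: "u \<in> ?U"
    show "ereal (hi - lo) \<le> (SUP p\<in>strip lo hi \<times> strip lo hi. ereal \<bar>u \<bullet> fst p - u \<bullet> snd p\<bar>)"
    proof (cases "u$1 = 0")
      case False
      have "1 \<le> \<bar>u$1\<bar>" using Ints_ge1 u False by auto
      then have "hi - lo \<le> \<bar>u$1\<bar> * (hi - lo)" using assms by (simp add: mult_le_cancel_right1)
      also have "\<dots> = \<bar>u \<bullet> vector [hi, 0] - u \<bullet> vector [lo, 0]\<bar>"
      proof -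
        have "u \<bullet> vector [hi, 0] - u \<bullet> vector [lo, 0] = u$1 * (hi - lo)" by (simp add: inner2 algebra_simps)
        then show ?thesis using assms by (simp add: abs_mult)
      qed
      finally show ?thesis
        by (intro SUP_upper2[of "(vector [hi, 0], vector [lo, 0])"]) (use assms in \<open>auto simp: strip_def\<close>)
    next
      case True
      then have "u$2 \<noteq> 0" using u by (auto simp: vec_eq_iff forall_2)
      then have "1 \<le> \<bar>u$2\<bar>" using Ints_ge1 u by auto
      then have "hi - lo \<le> \<bar>u$2\<bar> * (hi - lo)" using assms by (simp add: mult_le_cancel_right1)
      also have "\<dots> = \<bar>u \<bullet> vector [lo, hi - lo] - u \<bullet> vector [lo, 0]\<bar>"
      proof -
        have "u \<bullet> vector [lo, hi - lo] - u \<bullet> vector [lo, 0] = u$2 * (hi - lo)" using True by (simp add: inner2 algebra_simps)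
        then show ?thesis using assms by (simp add: abs_mult)
      qed
      finally show ?thesis
        by (intro SUP_upper2[of "(vector [lo, hi - lo], vector [lo, 0])"]) (use assms in \<open>auto simp: strip_def\<close>)
    qed
  qed
qed



lemma convex_comb_in: "convex C \<Longrightarrow> x \<in> C \<Longrightarrow> y \<in> C \<Longrightarrow> 0 \<le> a \<Longrightarrow> a \<le> 1 \<Longrightarrow> x + a *\<^sub>R (y - x) \<in> C"
proof -
  assume a: "convex C" "x \<in> C" "y \<in> C" "0 \<le> a" "a \<le> 1"
  have "(1 - a) *\<^sub>R x + a *\<^sub>R y \<in> C" using a unfolding convex_def by auto
  moreover have "(1 - a) *\<^sub>R x + a *\<^sub>R y = x + a *\<^sub>R (y - x)" by (simp add: algebra_simps)
  ultimately show ?thesis by simp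
qed

lemma ray_exists:
  fixes C :: "(real^2) set"
  assumes "closed C" "convex C" "\<not> bounded C"
  obtains d where "d \<noteq> 0" "\<And>x t. x \<in> C \<Longrightarrow> 0 \<le> t \<Longrightarrow> x + t *\<^sub>R d \<in> C"
proof -
  obtain x0 where x0: "x0 \<in> C" using assms(3) by fastforce
  have "\<exists>y\<in>C. real n < norm (y - x0)" for n :: nat
  proof (rule ccontr)
    assume "\<not> ?thesis"
    then have "C \<subseteq> cball x0 (real n)" by (auto simp: dist_norm norm_minus_commute)
    then show False using assms(3) bounded_cball bounded_subset by blast
  qed
  then obtain y where y: "\<And>n. y n \<in> C" "\<And>n. real n < norm (y n - x0)" by metis
  define u where "u n = (1 / norm (y n - x0)) *\<^sub>R (y n - x0)" for n
  have yn0: "norm (y n - x0) > 0" for n using y(2)[of n] by linarith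
  have "u n \<in> sphere 0 1" for n using yn0[of n] unfolding u_def by simp
  then obtain l r where l: "l \<in> sphere 0 1" "strict_mono r" "(u \<circ> r) \<longlonglongrightarrow> l"
    using seq_compactE[OF compact_imp_seq_compact[OF compact_sphere]] by metis
  have ray0: "x0 + t *\<^sub>R l \<in> C" if t: "0 \<le> t" for t
  proof (rule Lim_in_closed_set[OF assms(1)])
    show "((\<lambda>k. x0 + t *\<^sub>R (u \<circ> r) k) \<longlongrightarrow> x0 + t *\<^sub>R l) sequentially"
      by (intro tendsto_intros l(3))
    show "sequentially \<noteq> bot" by simp
    show "\<forall>\<^sub>F k in sequentially. x0 + t *\<^sub>R (u \<circ> r) k \<in> C"
    proof (rule eventually_sequentiallyI[of "nat \<lceil>t\<rceil>"])
      fix k assume k: "nat \<lceil>t\<rceil> \<le> k"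
      have "real k \<le> real (r k)" using seq_suble[OF l(2)] by simp
      then have "t \<le> norm (y (r k) - x0)" using k y(2)[of "r k"] by linarith
      then have "x0 + (t / norm (y (r k) - x0)) *\<^sub>R (y (r k) - x0) \<in> C"
        using convex_comb_in[OF assms(2) x0 y(1)[of "r k"]] yn0[of "r k"] t by simp
      then show "x0 + t *\<^sub>R (u \<circ> r) k \<in> C" unfolding u_def by simp
    qed
  qed
  have "x + t *\<^sub>R l \<in> C" if x: "x \<in> C" and t: "0 \<le> t" for x t
  proof (rule Lim_in_closed_set[OF assms(1)])
    show "((\<lambda>n. x + t *\<^sub>R l + inverse (real (Suc n)) *\<^sub>R (x0 - x)) \<longlongrightarrow> x + t *\<^sub>R l) sequentially"
      using tendsto_add[OF tendsto_const tendsto_scaleR[OF LIMSEQ_inverse_real_of_nat tendsto_const], of "x + t *\<^sub>R l" "x0 - x"]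
      by simp
    show "sequentially \<noteq> bot" by simp
    show "\<forall>\<^sub>F n in sequentially. x + t *\<^sub>R l + inverse (real (Suc n)) *\<^sub>R (x0 - x) \<in> C"
    proof (rule always_eventually, rule allI)
      fix n
      have "x0 + (real (Suc n) * t) *\<^sub>R l \<in> C" using ray0 t by simp
      then have "x + inverse (real (Suc n)) *\<^sub>R ((x0 + (real (Suc n) * t) *\<^sub>R l) - x) \<in> C"
        by (intro convex_comb_in[OF assms(2) x]) (auto simp: field_simps)
      moreover have "x + inverse (real (Suc n)) *\<^sub>R ((x0 + (real (Suc n) * t) *\<^sub>R l) - x)
          = x + t *\<^sub>R l + inverse (real (Suc n)) *\<^sub>R (x0 - x)"
      proof -
        have e: "inverse (real (Suc n)) * (real (Suc n) * t) = t" by simp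
        have "x + inverse (real (Suc n)) *\<^sub>R ((x0 + (real (Suc n) * t) *\<^sub>R l) - x)
          = x + (inverse (real (Suc n)) * (real (Suc n) * t)) *\<^sub>R l + inverse (real (Suc n)) *\<^sub>R (x0 - x)"
          by (simp add: algebra_simps)
        then show ?thesis unfolding e .
      qed
      ultimately show "x + t *\<^sub>R l + inverse (real (Suc n)) *\<^sub>R (x0 - x) \<in> C" by metis
    qed
  qed
  moreover have "l \<noteq> 0" using l(1) by auto
  ultimately show ?thesis using that by blast
qed



lemma norm2_le: "norm (x::real^2) \<le> \<bar>x$1\<bar> + \<bar>x$2\<bar>"
  using norm_le_l1_cart[of x] by (simp add: sum_2)

lemma approx_aux:
  fixes d :: "real^2"
  assumes d1: "d$1 \<noteq> 0" and r: "r > 0"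
  obtains z s where "\<forall>i. z$i \<in> \<int>" "S \<le> s" "norm (z - s *\<^sub>R d) < r"
proof -
  define \<sigma> where "\<sigma> = (if d$1 > 0 then 1 else -1::real)"
  have \<sigma>: "\<sigma> * d$1 = \<bar>d$1\<bar>" "\<sigma> * \<sigma> = 1" "\<sigma> \<in> \<int>" using d1 unfolding \<sigma>_def by auto
  define k :: nat where "k = nat \<lceil>max S 0 * \<bar>d$1\<bar>\<rceil> + 1"
  have k: "max S 0 * \<bar>d$1\<bar> \<le> real k" "k \<ge> 1" unfolding k_def by linarith+
  define N :: nat where "N = nat \<lceil>real k / r\<rceil> + 1"
  have N: "real k / r < real N" "N > 0" unfolding N_def by linarith+
  obtain p q where pq: "0 < q" "\<bar>of_int q * (d$2 / d$1) - of_int p\<bar> < 1 / N"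
    using Dirichlet_approx[OF N(2), of "d$2 / d$1"] by metis
  define z :: "real^2" where "z = vector [\<sigma> * k * q, \<sigma> * k * p]"
  define s where "s = real k * q / \<bar>d$1\<bar>"
  have "\<forall>i. z$i \<in> \<int>" using \<sigma>(3) unfolding z_def forall_2 by simp
  moreover have "S \<le> s"
  proof -
    have "real k \<le> real k * q" using k pq(1) by simp
    then have "max S 0 * \<bar>d$1\<bar> \<le> real k * q" using k by linarith
    then have "max S 0 \<le> s" unfolding s_def
      by (rule pos_le_divide_eq[THEN iffD2, rotated]) (use d1 in auto)
    then show ?thesis by simp
  qed
  moreover have "norm (z - s *\<^sub>R d) < r"
  proof -
    have inv: "1 / \<bar>d$1\<bar> = \<sigma> / d$1" using d1 by (cases "d$1 > 0") (auto simp: \<sigma>_def)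
    have c1: "(z - s *\<^sub>R d)$1 = 0"
    proof -
      have "(z - s *\<^sub>R d)$1 = \<sigma> * k * q - real k * q * (d$1 / \<bar>d$1\<bar>)" unfolding z_def s_def by simp
      also have "d$1 / \<bar>d$1\<bar> = \<sigma>" using inv d1 by (simp add: field_simps)
      finally show ?thesis by simp
    qed
    have c2: "(z - s *\<^sub>R d)$2 = - (\<sigma> * k) * (of_int q * (d$2 / d$1) - of_int p)"
    proof -
      have "(z - s *\<^sub>R d)$2 = \<sigma> * k * p - real k * q * d$2 * (1 / \<bar>d$1\<bar>)" unfolding z_def s_def by simp
      also have "\<dots> = \<sigma> * k * p - real k * q * d$2 * (\<sigma> / d$1)" unfolding inv ..
      finally show ?thesis by (simp add: algebra_simps)
    qed
    have "\<bar>\<sigma>\<bar> = 1" unfolding \<sigma>_def by simp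
    then have "\<bar>(z - s *\<^sub>R d)$2\<bar> = real k * \<bar>of_int q * (d$2 / d$1) - of_int p\<bar>"
      unfolding c2 by (simp add: abs_mult)
    also have "\<dots> \<le> real k * (1 / N)" using pq(2) by (intro mult_left_mono) auto
    also have "\<dots> < r" using N r by (simp add: field_simps)
    finally show ?thesis using norm2_le[of "z - s *\<^sub>R d"] c1 by simp
  qed
  ultimately show ?thesis using that by blast
qed

lemma approx:
  fixes d :: "real^2"
  assumes d: "d \<noteq> 0" and r: "r > 0"
  obtains z s where "\<forall>i. z$i \<in> \<int>" "S \<le> s" "norm (z - s *\<^sub>R d) < r"
proof (cases "d$1 = 0")
  case False
  then show ?thesis using approx_aux[OF False r] that by metis
next
  case True
  then have d2: "d$2 \<noteq> 0" using d by (auto simp: vec_eq_iff forall_2)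
  define d' :: "real^2" where "d' = vector [d$2, d$1]"
  have "d'$1 \<noteq> 0" using d2 by (simp add: d'_def)
  then obtain z s where z: "\<forall>i. z$i \<in> \<int>" "S \<le> s" "norm (z - s *\<^sub>R d') < r"
    using approx_aux[OF _ r] by metis
  define z' :: "real^2" where "z' = vector [z$2, z$1]"
  have "\<forall>i. z'$i \<in> \<int>" using z(1) by (simp add: z'_def forall_2)
  moreover have "norm (z' - s *\<^sub>R d) = norm (z - s *\<^sub>R d')"
    unfolding norm_vec_def L2_set_def by (simp add: sum_2 z'_def d'_def add.commute)
  ultimately show ?thesis using that z by metis
qed



lemma int_ray:
  fixes C :: "(real^2) set"
  assumes ray: "\<And>x t. x \<in> C \<Longrightarrow> 0 \<le> t \<Longrightarrow> x + t *\<^sub>R d \<in> C"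
    and y: "y \<in> interior C" and t: "0 \<le> t"
  shows "y + t *\<^sub>R d \<in> interior C"
proof -
  obtain e where e: "e > 0" "ball y e \<subseteq> C" using y by (auto simp: mem_interior)
  have "ball (y + t *\<^sub>R d) e \<subseteq> C"
  proof
    fix w assume "w \<in> ball (y + t *\<^sub>R d) e"
    then have "w - t *\<^sub>R d \<in> ball y e" by (simp add: dist_norm algebra_simps)
    then have "w - t *\<^sub>R d + t *\<^sub>R d \<in> C" using e(2) ray t by blast
    then show "w \<in> C" by simp
  qed
  then show ?thesis using e(1) by (auto simp: mem_interior)
qed

lemma shift_vertex:
  fixes C :: "(real^2) set"
  assumes ray: "\<And>x t. x \<in> C \<Longrightarrow> 0 \<le> t \<Longrightarrow> x + t *\<^sub>R d \<in> C"
    and b: "ball c r \<subseteq> interior C" and z: "norm (z - s *\<^sub>R d) < r" and ts: "0 \<le> t + s"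
  shows "c + t *\<^sub>R d + z \<in> interior C"
proof -
  have "dist c (c + (z - s *\<^sub>R d)) = norm (z - s *\<^sub>R d)"
    unfolding dist_norm by (metis add_diff_cancel_left' diff_add_cancel norm_minus_commute)
  then have "c + (z - s *\<^sub>R d) \<in> ball c r" using z by (simp only: mem_ball)
  then have "c + (z - s *\<^sub>R d) + (t + s) *\<^sub>R d \<in> interior C"
    using int_ray[OF ray _ ts] b by blast
  moreover have "c + (z - s *\<^sub>R d) + (t + s) *\<^sub>R d = c + t *\<^sub>R d + z" by (simp add: algebra_simps)
  ultimately show ?thesis by simp
qed

lemma vertex_decomp:
  fixes C :: "(real^2) set"
  assumes "v \<in> interior C + range (\<lambda>t. t *\<^sub>R d)"
  obtains c t r where "r > 0" "ball c r \<subseteq> interior C" "v = c + t *\<^sub>R d"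
proof -
  obtain c t where c: "c \<in> interior C" "v = c + t *\<^sub>R d" using assms by (auto simp: set_plus_def)
  obtain r where "r > 0" "ball c r \<subseteq> interior C"
    using c(1) open_interior open_contains_ball by blast
  then show ?thesis using that c(2) by blast
qed

lemma line_inv:
  assumes AA: "A = \<int> \<or> A = UNIV" and C: "closed C" "convex C" "aff_dim C = 2" "maximal_free A Delta2 C"
    and d: "d \<noteq> 0" and ray: "\<And>x t. x \<in> C \<Longrightarrow> 0 \<le> t \<Longrightarrow> x + t *\<^sub>R d \<in> C"
  shows "x \<in> C \<Longrightarrow> x + t *\<^sub>R d \<in> C"
proof -
  define L where "L = range (\<lambda>t. t *\<^sub>R d)"
  have L: "L = span {d}" unfolding L_def by (simp add: span_singleton)
  have cL: "convex L" unfolding L by (simp add: subspace_imp_convex)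
  have rL: "rel_interior L = L" unfolding L by (simp add: rel_interior_affine subspace_imp_affine)
  have ri: "rel_interior C = interior C" using interior_rel_interior[of C] C(3) by simp
  define D where "D = closure (C + L)"
  have "closed D" unfolding D_def by simp
  moreover have "convex D" unfolding D_def using C(2) cL by (simp add: convex_closure convex_set_plus)
  moreover have CD: "C \<subseteq> D"
  proof
    fix x assume "x \<in> C"
    then have "x + 0 *\<^sub>R d \<in> C + L" unfolding L_def by (blast intro: set_plus_intro)
    then show "x \<in> D" unfolding D_def using closure_subset by auto
  qed
  moreover have "free A Delta2 D"
    unfolding free_def
  proof
    assume "\<exists>T. unimodular_map A T \<and> T ` Delta2 \<subseteq> rel_interior D"
    then obtain T where T: "unimodular_map A T" "T ` Delta2 \<subseteq> rel_interior D" by blast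
    have "rel_interior D = interior C + L"
      unfolding D_def convex_rel_interior_closure[OF convex_set_plus[OF C(2) cL]]
      using rel_interior_sum[OF C(2) cL] rL ri by simp
    then have TD: "T ` Delta2 \<subseteq> interior C + range (\<lambda>t. t *\<^sub>R d)" using T(2) L_def by simp
    have "0 \<in> Delta2" "axis 1 1 \<in> Delta2" "axis 2 1 \<in> Delta2" unfolding Delta2_def by (auto intro: hull_inc)
    then have v: "T 0 \<in> interior C + range (\<lambda>t. t *\<^sub>R d)" "T (axis 1 1) \<in> interior C + range (\<lambda>t. t *\<^sub>R d)"
      "T (axis 2 1) \<in> interior C + range (\<lambda>t. t *\<^sub>R d)" using TD by blast+
    obtain c1 t1 r1 where 1: "r1 > 0" "ball c1 r1 \<subseteq> interior C" "T 0 = c1 + t1 *\<^sub>R d" by (rule vertex_decomp[OF v(1)])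
    obtain c2 t2 r2 where 2: "r2 > 0" "ball c2 r2 \<subseteq> interior C" "T (axis 1 1) = c2 + t2 *\<^sub>R d" by (rule vertex_decomp[OF v(2)])
    obtain c3 t3 r3 where 3: "r3 > 0" "ball c3 r3 \<subseteq> interior C" "T (axis 2 1) = c3 + t3 *\<^sub>R d" by (rule vertex_decomp[OF v(3)])
    define r where "r = min r1 (min r2 r3)"
    have r: "r > 0" "r \<le> r1" "r \<le> r2" "r \<le> r3" using 1 2 3 unfolding r_def by auto
    obtain z s where z: "\<forall>i. z$i \<in> \<int>" "\<bar>t1\<bar> + \<bar>t2\<bar> + \<bar>t3\<bar> \<le> s" "norm (z - s *\<^sub>R d) < r"
      using approx[OF d r(1)] by metis
    define T' where "T' = (\<lambda>x. x + vector [z$1, z$2]) \<circ> T"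
    have "unimodular_map A (\<lambda>x. x + vector [z$1, z$2])"
      by (rule um_trans[OF AA]) (use z(1) AA in auto)
    then have T': "unimodular_map A T'" unfolding T'_def using um_comp[OF AA T(1)] by blast
    have zz: "vector [z$1, z$2] = z" by (simp add: vec_eq_iff forall_2)
    have "T' 0 \<in> rel_interior C" unfolding ri T'_def zz o_def 1(3)
      using shift_vertex[OF ray, of c1 r1 z s t1] 1 r z by auto
    moreover have "T' (axis 1 1) \<in> rel_interior C" unfolding ri T'_def zz o_def 2(3)
      using shift_vertex[OF ray, of c2 r2 z s t2] 2 r z by auto
    moreover have "T' (axis 2 1) \<in> rel_interior C" unfolding ri T'_def zz o_def 3(3)
      using shift_vertex[OF ray, of c3 r3 z s t3] 3 r z by auto
    ultimately show False using tri_contra[OF AA _ C(2) T'] C(4) unfolding maximal_free_def by blast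
  qed
  ultimately have "D = C" using C(4) unfolding maximal_free_def by blast
  moreover assume "x \<in> C"
  then have "x + t *\<^sub>R d \<in> C + L" unfolding L_def by (blast intro: set_plus_intro)
  ultimately show "x + t *\<^sub>R d \<in> C" unfolding D_def using closure_subset by blast
qed



definition ell :: "real^2 \<Rightarrow> real^2 \<Rightarrow> real" where
  "ell d x = d$1 * x$2 - d$2 * x$1"

lemma int_line:
  fixes C :: "(real^2) set"
  assumes line: "\<And>x t. x \<in> C \<Longrightarrow> x + t *\<^sub>R d \<in> C"
    and y: "y \<in> interior C"
  shows "y + t *\<^sub>R d \<in> interior C"
proof -
  obtain e where e: "e > 0" "ball y e \<subseteq> C" using y by (auto simp: mem_interior)
  have "ball (y + t *\<^sub>R d) e \<subseteq> C"
  proof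
    fix w assume "w \<in> ball (y + t *\<^sub>R d) e"
    then have "w + (-t) *\<^sub>R d \<in> ball y e" by (simp add: dist_norm algebra_simps)
    then have "w + (-t) *\<^sub>R d + t *\<^sub>R d \<in> C" using e(2) line by blast
    then show "w \<in> C" by simp
  qed
  then show ?thesis using e(1) by (auto simp: mem_interior)
qed

lemma slab_interior:
  fixes C :: "(real^2) set"
  assumes line: "\<And>x t. x \<in> C \<Longrightarrow> x + t *\<^sub>R d \<in> C"
    and d: "d \<noteq> 0" and c: "c \<in> interior C"
  obtains \<rho> where "\<rho> > 0" "\<And>x. \<bar>ell d x - ell d c\<bar> < \<rho> \<Longrightarrow> x \<in> interior C"
proof -
  obtain r where r: "r > 0" "ball c r \<subseteq> interior C" using c open_interior open_contains_ball by blast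
  define N2 where "N2 = d$1 * d$1 + d$2 * d$2"
  have "d$1 \<noteq> 0 \<or> d$2 \<noteq> 0" using d by (auto simp: vec_eq_iff forall_2)
  then have N2: "N2 > 0" unfolding N2_def by (simp add: sum_squares_gt_zero_iff)
  define s where "s = \<bar>d$1\<bar> + \<bar>d$2\<bar>"
  have s: "s > 0" using \<open>d$1 \<noteq> 0 \<or> d$2 \<noteq> 0\<close> unfolding s_def by auto
  define \<rho> where "\<rho> = r * N2 / s"
  have "\<rho> > 0" unfolding \<rho>_def using r N2 s by simp
  moreover have "x \<in> interior C" if x: "\<bar>ell d x - ell d c\<bar> < \<rho>" for x
  proof -
    define w where "w = x - c"
    define \<beta> where "\<beta> = (d$1 * w$2 - d$2 * w$1) / N2"
    define \<alpha> where "\<alpha> = (d$1 * w$1 + d$2 * w$2) / N2"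
    define n :: "real^2" where "n = vector [- d$2, d$1]"
    have ellw: "d$1 * w$2 - d$2 * w$1 = ell d x - ell d c" unfolding w_def ell_def by (simp add: algebra_simps)
    have "norm (\<beta> *\<^sub>R n) \<le> \<bar>\<beta>\<bar> * s"
      using norm2_le[of n] unfolding n_def s_def by (simp add: mult_left_mono)
    also have "\<dots> = \<bar>ell d x - ell d c\<bar> * s / N2" unfolding \<beta>_def ellw using N2 by (simp add: abs_div)
    also have "\<dots> < \<rho> * s / N2" using x s N2 by (simp add: divide_strict_right_mono)
    also have "\<dots> = r" unfolding \<rho>_def using s N2 by simp
    finally have "c + \<beta> *\<^sub>R n \<in> ball c r" by (simp add: dist_norm)
    then have "c + \<beta> *\<^sub>R n \<in> interior C" using r(2) by blast
    then have "c + \<beta> *\<^sub>R n + \<alpha> *\<^sub>R d \<in> interior C" using int_line[OF line] by blast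
    moreover have "c + \<beta> *\<^sub>R n + \<alpha> *\<^sub>R d = x"
    proof -
      have N0: "N2 \<noteq> 0" using N2 by simp
      have a1: "\<beta> * (- d$2) + \<alpha> * d$1 = ((d$1*w$2 - d$2*w$1)*(-d$2) + (d$1*w$1 + d$2*w$2)*d$1) / N2"
        unfolding \<alpha>_def \<beta>_def using N0 by (simp add: field_simps)
      have a2: "(d$1*w$2 - d$2*w$1)*(-d$2) + (d$1*w$1 + d$2*w$2)*d$1 = w$1 * N2"
        unfolding N2_def by (simp add: algebra_simps)
      have b1: "\<beta> * d$1 + \<alpha> * d$2 = ((d$1*w$2 - d$2*w$1)*d$1 + (d$1*w$1 + d$2*w$2)*d$2) / N2"
        unfolding \<alpha>_def \<beta>_def using N0 by (simp add: field_simps)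
      have b2: "(d$1*w$2 - d$2*w$1)*d$1 + (d$1*w$1 + d$2*w$2)*d$2 = w$2 * N2"
        unfolding N2_def by (simp add: algebra_simps)
      have "\<beta> * (- d$2) + \<alpha> * d$1 = w$1" "\<beta> * d$1 + \<alpha> * d$2 = w$2"
        using a1 a2 b1 b2 N0 by simp_all
      then show ?thesis unfolding n_def w_def by (simp add: vec_eq_iff forall_2 algebra_simps)
    qed
    ultimately show ?thesis by simp
  qed
  ultimately show ?thesis using that by blast
qed

lemma dichotomy:
  fixes d :: "real^2"
  assumes d: "d \<noteq> 0" and \<rho>: "\<rho> > 0"
  obtains p q :: int where "coprime p q" "ell d (vector [p, q]) = 0 \<or> (0 < ell d (vector [p, q]) \<and> ell d (vector [p, q]) < \<rho>)"
proof (cases "d$1 = 0")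
  case True
  have "ell d (vector [0, 1]) = 0" using True by (simp add: ell_def)
  then show ?thesis using that[of 0 1] by simp
next
  case False
  define N :: nat where "N = nat \<lceil>\<bar>d$1\<bar> / \<rho>\<rceil> + 1"
  have N: "\<bar>d$1\<bar> / \<rho> < real N" "N > 0" unfolding N_def by linarith+
  obtain h k where hk: "coprime h k" "0 < k" "\<bar>of_int k * (d$2 / d$1) - of_int h\<bar> < 1/N"
    using Dirichlet_approx_coprime[OF N(2), of "d$2 / d$1"] by metis
  have e: "ell d (vector [k, h]) = - d$1 * (of_int k * (d$2 / d$1) - of_int h)"
    using False by (simp add: ell_def field_simps)
  have "\<bar>ell d (vector [k, h])\<bar> < \<bar>d$1\<bar> * (1 / N)"
    unfolding e abs_mult abs_minus_cancel using hk(3) False by (intro mult_strict_left_mono) auto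
  also have "\<dots> < \<rho>" using N \<rho> by (simp add: field_simps)
  finally have lt: "\<bar>ell d (vector [k, h])\<bar> < \<rho>" .
  have neg: "ell d (vector [- k, - h]) = - ell d (vector [k, h])" by (simp add: ell_def)
  have cp: "coprime k h" "coprime (-k) (-h)" using hk(1) by (simp_all add: coprime_commute)
  consider "ell d (vector [k, h]) = 0" | "ell d (vector [k, h]) > 0" | "ell d (vector [k, h]) < 0" by linarith
  then show ?thesis
  proof cases
    case 1 then show ?thesis using that[of k h] cp by simp
  next
    case 2 then show ?thesis using that[of k h] cp lt by simp
  next
    case 3 then show ?thesis using that[of "-k" "-h"] cp lt neg by simp
  qed
qed



lemma no_small:
  fixes C :: "(real^2) set" and p q :: int
  assumes AA: "A = \<int> \<or> A = UNIV" and fr: "free A Delta2 C" and cv: "convex C"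
    and ri: "rel_interior C = interior C"
    and slab: "\<And>x. \<bar>ell d x - ell d c\<bar> < \<rho> \<Longrightarrow> x \<in> interior C"
    and cp: "coprime p q" and h: "0 < ell d (vector [p, q])" "ell d (vector [p, q]) < \<rho> / 2"
  shows False
proof -
  define hh where "hh = ell d (vector [p, q])"
  have hh: "hh = d$1 * q - d$2 * p" unfolding hh_def ell_def by simp
  obtain a b where ab: "a * p + b * q = 1" using bezout_int[of p q] cp by (metis coprime_iff_gcd_eq_1)
  define lw where "lw = d$1 * a + d$2 * b"
  define k where "k = \<lfloor>lw / hh\<rfloor>"
  define m where "m = \<lceil>ell d c / hh\<rceil>"
  have hpos: "hh > 0" using h unfolding hh_def by simp
  have k1: "real_of_int k * hh \<le> lw" using hpos unfolding k_def by (rule floor_divide_lower)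
  have "lw / hh < real_of_int k + 1" unfolding k_def by (rule real_of_int_floor_add_one_gt)
  then have k2: "lw < (real_of_int k + 1) * hh" using hpos by (simp add: pos_divide_less_eq)
  have "ell d c / hh \<le> real_of_int m" "real_of_int m - 1 < ell d c / hh" unfolding m_def using ceiling_correct by blast+
  then have m1: "ell d c \<le> real_of_int m * hh" and m2': "(real_of_int m - 1) * hh < ell d c"
    using hpos by (simp_all add: pos_divide_le_eq pos_less_divide_eq)
  have m2: "real_of_int m * hh < ell d c + hh" using m2' by (simp add: algebra_simps)
  let ?T = "\<lambda>x::real^2. vector [of_int p * x$1 + of_int (- b - k * p) * x$2 + of_int (m * p),
                                 of_int q * x$1 + of_int (a - k * q) * x$2 + of_int (m * q)] :: real^2"
  have det: "\<bar>of_int p * of_int (a - k * q) - of_int (- b - k * p) * of_int q\<bar> = (1::real)"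
  proof -
    have "p * (a - k * q) - (- b - k * p) * q = 1" using ab by (simp add: algebra_simps)
    then have "of_int (p * (a - k * q) - (- b - k * p) * q) = (1::real)" by simp
    then show ?thesis by simp
  qed
  have T: "unimodular_map A ?T"
    by (rule um_mk[OF AA]) (use det AA in auto)
  have e0: "ell d (?T 0) = m * hh" unfolding hh ell_def by (simp add: algebra_simps)
  have e1: "ell d (?T (axis 1 1)) = m * hh + hh" unfolding hh ell_def by (simp add: algebra_simps)
  have e2: "ell d (?T (axis 2 1)) = m * hh + (lw - k * hh)" unfolding hh ell_def lw_def by (simp add: algebra_simps)
  have h': "hh < \<rho> / 2" using h unfolding hh_def by simp
  have "\<bar>ell d (?T 0) - ell d c\<bar> < \<rho>" unfolding e0 using m1 m2 h' hpos by (simp add: abs_less_iff)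
  then have "?T 0 \<in> rel_interior C" unfolding ri by (rule slab)
  moreover have "\<bar>ell d (?T (axis 1 1)) - ell d c\<bar> < \<rho>" unfolding e1 using m1 m2 h' hpos by (simp add: abs_less_iff)
  then have "?T (axis 1 1) \<in> rel_interior C" unfolding ri by (rule slab)
  moreover have "\<bar>ell d (?T (axis 2 1)) - ell d c\<bar> < \<rho>" unfolding e2 using m1 m2 k1 k2 h' hpos
    by (simp add: abs_less_iff algebra_simps)
  then have "?T (axis 2 1) \<in> rel_interior C" unfolding ri by (rule slab)
  ultimately show False using tri_contra[OF AA fr cv T] by blast
qed



lemma mid_interior:
  fixes C :: "(real^2) set"
  assumes cv: "convex C" and line: "\<And>x t. x \<in> C \<Longrightarrow> x + t *\<^sub>R axis 2 1 \<in> C"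
    and c: "c \<in> interior C" and x: "x \<in> C" and y: "y \<in> C" and s: "x$1 < s" "s < y$1"
  shows "vector [s, t] \<in> interior C"
proof -
  have "\<exists>z. z \<in> interior C \<and> z$1 = s"
  proof (cases "c$1 = s")
    case True then show ?thesis using c by blast
  next
    case False
    then consider "c$1 < s" | "s < c$1" by linarith
    then show ?thesis
    proof cases
      case 1
      define e where "e = (y$1 - s) / (y$1 - c$1)"
      have e: "0 < e" "e \<le> 1" using 1 s unfolding e_def by auto
      have "y - e *\<^sub>R (y - c) \<in> interior C" by (rule mem_interior_convex_shrink[OF cv c y e])
      moreover have "e * (y$1 - c$1) = y$1 - s" using 1 s unfolding e_def by simp
      then have "(y - e *\<^sub>R (y - c))$1 = s" by (simp add: algebra_simps)
      ultimately show ?thesis by blast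
    next
      case 2
      define e where "e = (s - x$1) / (c$1 - x$1)"
      have e: "0 < e" "e \<le> 1" using 2 s unfolding e_def by auto
      have "x - e *\<^sub>R (x - c) \<in> interior C" by (rule mem_interior_convex_shrink[OF cv c x e])
      moreover have "e * (c$1 - x$1) = s - x$1" using 2 s unfolding e_def by simp
      then have "(x - e *\<^sub>R (x - c))$1 = s" by (simp add: algebra_simps)
      ultimately show ?thesis by blast
    qed
  qed
  then obtain z where z: "z \<in> interior C" "z$1 = s" by blast
  have "z + (t - z$2) *\<^sub>R axis 2 1 \<in> interior C" by (rule int_line[OF line z(1)])
  moreover have "z + (t - z$2) *\<^sub>R axis 2 1 = vector [s, t]" using z(2) by (simp add: vec_eq_iff forall_2)
  ultimately show ?thesis by simp
qed

lemma maxfree_eq: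
  assumes "maximal_free A Delta2 C" "closed K" "convex K" "free A Delta2 K" "C \<subseteq> K"
  shows "C = K"
  using assms unfolding maximal_free_def by metis

lemma strip_analysis_Z:
  fixes C :: "(real^2) set"
  assumes C: "convex C" "maximal_free \<int> Delta2 C" and c: "c \<in> interior C"
    and line: "\<And>x t. x \<in> C \<Longrightarrow> x + t *\<^sub>R axis 2 1 \<in> C"
  obtains T where "unimodular_map \<int> T" "C = T ` strip (-1) 1"
proof -
  have AA: "\<int> = \<int> \<or> \<int> = (UNIV :: real set)" by simp
  have fr: "free \<int> Delta2 C" using C(2) unfolding maximal_free_def by blast
  have ri: "rel_interior C = interior C"
    using interior_rel_interior_gen[of C] c by (auto split: if_splits)
  have bound: False if x: "x \<in> C" and y: "y \<in> C" and k: "k \<in> \<int>" "x$1 < k" "k + 1 < y$1" for x y k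
  proof -
    let ?T = "\<lambda>x::real^2. x + vector [k, 0]"
    have T: "unimodular_map \<int> ?T" by (rule um_trans) (use k in auto)
    have mi: "vector [s, t] \<in> rel_interior C" if "x$1 < s" "s < y$1" for s t
      unfolding ri by (rule mid_interior[OF C(1) line c x y that])
    have "?T 0 \<in> rel_interior C" using mi[of k 0] k by simp
    moreover have "axis 1 1 + vector [k, 0] = (vector [k+1, 0] :: real^2)" by (simp add: vec_eq_iff forall_2)
    then have "?T (axis 1 1) \<in> rel_interior C" using mi[of "k+1" 0] k by simp
    moreover have "axis 2 1 + vector [k, 0] = (vector [k, 1] :: real^2)" by (simp add: vec_eq_iff forall_2)
    then have "?T (axis 2 1) \<in> rel_interior C" using mi[of "k" 1] k by simp
    ultimately show False using tri_contra[OF AA fr C(1) T] by blast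
  qed
  have cC: "c \<in> C" using c interior_subset by blast
  define X where "X = (\<lambda>x. x$1) ` C"
  have lowb: "c$1 - 2 \<le> x$1" if "x \<in> C" for x
  proof (rule ccontr)
    assume "\<not> c$1 - 2 \<le> x$1"
    then show False
      using bound[OF that cC, of "of_int (\<lfloor>x$1\<rfloor> + 1)"] floor_correct[of "x$1"] by simp
  qed
  have bdd: "bdd_below X" unfolding X_def using lowb by (intro bdd_belowI) blast
  have Xne: "X \<noteq> {}" unfolding X_def using cC by blast
  define a where "a = Inf X"
  define m where "m = \<lfloor>a\<rfloor> + 1"
  have am: "real_of_int m - 1 \<le> a" "a < real_of_int m" unfolding m_def by linarith+
  have sub: "C \<subseteq> strip (m - 1) (m + 1)"
  proof
    fix x assume x: "x \<in> C"
    have "a \<le> x$1" unfolding a_def X_def by (rule cInf_lower) (use x bdd X_def in auto)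
    moreover have "x$1 \<le> m + 1"
    proof (rule ccontr)
      assume H: "\<not> x$1 \<le> m + 1"
      have "Inf X < m" using am a_def by simp
      then obtain w where "w \<in> X" "w < m" using cInf_lessD[OF Xne] by blast
      then obtain x' where "x' \<in> C" "x'$1 < m" unfolding X_def by blast
      then show False using bound[OF _ x, of x' m] H by auto
    qed
    ultimately show "x \<in> strip (m - 1) (m + 1)" using am unfolding strip_def by simp
  qed
  let ?T = "\<lambda>x::real^2. x + vector [real_of_int m, 0]"
  have T: "unimodular_map \<int> ?T" by (rule um_trans) auto
  have img: "?T ` strip (-1) 1 = strip (m - 1) (m + 1)" using strip_shift[of m "-1" 1] by (simp add: add.commute)
  have "C = strip (m - 1) (m + 1)"
    apply (rule maxfree_eq[OF C(2) strip_closed strip_convex _ sub])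
    using um_free[OF AA T strip_free_Z] img by simp
  then show ?thesis using that[OF T] img by simp
qed

lemma strip_analysis_R:
  fixes C :: "(real^2) set"
  assumes C: "convex C" "maximal_free UNIV Delta2 C" and c: "c \<in> interior C"
    and line: "\<And>x t. x \<in> C \<Longrightarrow> x + t *\<^sub>R axis 2 1 \<in> C"
  obtains T where "unimodular_map UNIV T" "C = T ` strip 0 1"
proof -
  have AA: "UNIV = \<int> \<or> UNIV = (UNIV :: real set)" by simp
  have fr: "free UNIV Delta2 C" using C(2) unfolding maximal_free_def by blast
  have ri: "rel_interior C = interior C"
    using interior_rel_interior_gen[of C] c by (auto split: if_splits)
  have bound: "y$1 - x$1 \<le> 1" if x: "x \<in> C" and y: "y \<in> C" for x y
  proof (rule ccontr)
    assume H: "\<not> y$1 - x$1 \<le> 1"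
    define s where "s = x$1 + (y$1 - x$1 - 1) / 2"
    have hp: "0 < (y$1 - x$1 - 1) / 2" using H by simp
    have hp2: "(y$1 - x$1 - 1) / 2 < y$1 - x$1 - 1" using H by simp
    have s: "x$1 < s" "s + 1 < y$1" using hp hp2 unfolding s_def by linarith+
    let ?T = "\<lambda>x::real^2. x + vector [s, 0]"
    have T: "unimodular_map UNIV ?T" by (rule um_trans) auto
    have mi: "vector [s', t] \<in> rel_interior C" if "x$1 < s'" "s' < y$1" for s' t
      unfolding ri by (rule mid_interior[OF C(1) line c x y that])
    have "?T 0 \<in> rel_interior C" using mi[of s 0] s by simp
    moreover have "axis 1 1 + vector [s, 0] = (vector [s+1, 0] :: real^2)" by (simp add: vec_eq_iff forall_2)
    then have "?T (axis 1 1) \<in> rel_interior C" using mi[of "s+1" 0] s by simp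
    moreover have "axis 2 1 + vector [s, 0] = (vector [s, 1] :: real^2)" by (simp add: vec_eq_iff forall_2)
    then have "?T (axis 2 1) \<in> rel_interior C" using mi[of "s" 1] s by simp
    ultimately show False using tri_contra[OF AA fr C(1) T] by blast
  qed
  have cC: "c \<in> C" using c interior_subset by blast
  define X where "X = (\<lambda>x. x$1) ` C"
  have "c$1 - 1 \<le> w" if "w \<in> X" for w
  proof -
    obtain x where "x \<in> C" "w = x$1" using \<open>w \<in> X\<close> unfolding X_def by blast
    then show ?thesis using bound[OF \<open>x \<in> C\<close> cC] by simp
  qed
  then have bdd: "bdd_below X" by (rule bdd_belowI)
  have Xne: "X \<noteq> {}" unfolding X_def using cC by blast
  define a where "a = Inf X"
  have sub: "C \<subseteq> strip a (a + 1)"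
  proof
    fix x assume x: "x \<in> C"
    have "a \<le> x$1" unfolding a_def X_def by (rule cInf_lower) (use x bdd X_def in auto)
    moreover have "x$1 - 1 \<le> a" unfolding a_def
    proof (rule cInf_greatest[OF Xne])
      fix w assume "w \<in> X"
      then obtain x' where "x' \<in> C" "w = x'$1" unfolding X_def by blast
      then show "x$1 - 1 \<le> w" using bound[OF \<open>x' \<in> C\<close> x] by simp
    qed
    ultimately show "x \<in> strip a (a + 1)" unfolding strip_def by simp
  qed
  let ?T = "\<lambda>x::real^2. x + vector [a, 0]"
  have T: "unimodular_map UNIV ?T" by (rule um_trans) auto
  have img: "?T ` strip 0 1 = strip a (a + 1)" using strip_shift[of a 0 1] by (simp add: add.commute)
  have "C = strip a (a + 1)"
    apply (rule maxfree_eq[OF C(2) strip_closed strip_convex _ sub])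
    using um_free[OF AA T strip_free_R] img by simp
  then show ?thesis using that[OF T] img by simp
qed



lemma main_sub:
  fixes C :: "(real^2) set"
  assumes AA: "A = \<int> \<or> A = UNIV" and C: "closed C" "convex C" "\<not> bounded C" "aff_dim C = 2"
    "maximal_free A Delta2 C"
  shows "\<exists>T. unimodular_map A T \<and> C = T ` (if A = \<int> then strip (-1) 1 else strip 0 1)"
proof -
  obtain d where d: "d \<noteq> 0" and ray: "\<And>x t. x \<in> C \<Longrightarrow> 0 \<le> t \<Longrightarrow> x + t *\<^sub>R d \<in> C"
    using ray_exists[OF C(1-3)] by metis
  have line: "x + t *\<^sub>R d \<in> C" if "x \<in> C" for x t using line_inv[OF AA C(1,2,4,5) d ray that] .
  have ri: "rel_interior C = interior C" using interior_rel_interior[of C] C(4) by simp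
  have "C \<noteq> {}" using C(3) by auto
  then have "interior C \<noteq> {}" using ri rel_interior_eq_empty[OF C(2)] by simp
  then obtain c where c: "c \<in> interior C" by blast
  obtain \<rho> where \<rho>: "\<rho> > 0" "\<And>x. \<bar>ell d x - ell d c\<bar> < \<rho> \<Longrightarrow> x \<in> interior C"
    using slab_interior[OF line d c] by metis
  have fr: "free A Delta2 C" using C(5) unfolding maximal_free_def by blast
  obtain p q :: int where pq: "coprime p q"
    "ell d (vector [p, q]) = 0 \<or> (0 < ell d (vector [p, q]) \<and> ell d (vector [p, q]) < \<rho> / 2)"
    using dichotomy[OF d, of "\<rho> / 2"] \<rho>(1) by auto
  have l0: "ell d (vector [p, q]) = 0"
    using pq no_small[OF AA fr C(2) ri \<rho>(2) pq(1)] by blast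
  then have l0': "d$1 * q = d$2 * p" unfolding ell_def by simp
  obtain a b where ab: "a * p + b * q = 1" using bezout_int[of p q] pq(1) by (metis coprime_iff_gcd_eq_1)
  obtain lm where lam: "of_int p = lm * d$1" "of_int q = lm * d$2"
  proof (cases "d$1 = 0")
    case True
    then have "d$2 \<noteq> 0" using d by (auto simp: vec_eq_iff forall_2)
    then have "p = 0" using l0' True by simp
    then show ?thesis using that[of "q / d$2"] True \<open>d$2 \<noteq> 0\<close> by simp
  next
    case False
    show ?thesis using that[of "p / d$1"] False l0' by (simp add: field_simps)
  qed
  let ?T0 = "\<lambda>x::real^2. vector [of_int b * x$1 + of_int p * x$2 + 0, of_int (-a) * x$1 + of_int q * x$2 + 0] :: real^2"
  have T0: "unimodular_map A ?T0"
  proof (rule um_mk[OF AA])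
    have "b * q - p * (-a) = 1" using ab by (simp add: algebra_simps)
    then have "of_int (b * q - p * (-a)) = (1::real)" by simp
    then show "\<bar>of_int b * of_int q - of_int p * of_int (-a)\<bar> = (1::real)" by simp
  qed (use AA in auto)
  have lin: "?T0 (x + t *\<^sub>R axis 2 1) = ?T0 x + (t * lm) *\<^sub>R d" for x t
    using lam by (simp add: vec_eq_iff forall_2 algebra_simps)
  obtain S where S: "unimodular_map A S" "\<And>x. S (?T0 x) = x" "\<And>x. ?T0 (S x) = x"
    using um_inv[OF AA T0] by metis
  define C' where "C' = S ` C"
  have C': "convex C'" "maximal_free A Delta2 C'" "aff_dim C' = 2"
    unfolding C'_def using um_convex[OF AA S(1) C(2)] um_maxfree[OF AA S(1) C(5)] um_aff_dim[OF AA S(1)] C(4)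
    by auto
  have line': "x + t *\<^sub>R axis 2 1 \<in> C'" if xC: "x \<in> C'" for x t
  proof -
    obtain y where y: "y \<in> C" "x = S y" using xC unfolding C'_def by blast
    have "?T0 (x + t *\<^sub>R axis 2 1) = y + (t * lm) *\<^sub>R d" unfolding lin using y S(3) by simp
    then have "?T0 (x + t *\<^sub>R axis 2 1) \<in> C" using line y(1) by simp
    then have "S (?T0 (x + t *\<^sub>R axis 2 1)) \<in> C'" unfolding C'_def by blast
    then show ?thesis by (simp only: S(2))
  qed
  have "rel_interior C' = interior C'" using interior_rel_interior[of C'] C'(3) by simp
  moreover have "C' \<noteq> {}" using \<open>C \<noteq> {}\<close> unfolding C'_def by simp
  ultimately have "interior C' \<noteq> {}" using rel_interior_eq_empty[OF C'(1)] by simp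
  then obtain c' where c': "c' \<in> interior C'" by blast
  have CC: "C = ?T0 ` C'" unfolding C'_def image_image using S(3) by simp
  show ?thesis
  proof (cases "A = \<int>")
    case True
    obtain Tsh where Tsh: "unimodular_map \<int> Tsh" "C' = Tsh ` strip (-1) 1"
      using strip_analysis_Z[OF C'(1) C'(2)[unfolded True] c' line'] by metis
    have "unimodular_map A (?T0 \<circ> Tsh)" using um_comp[OF AA Tsh(1)[folded True] T0] .
    moreover have "C = (?T0 \<circ> Tsh) ` strip (-1) 1" unfolding CC Tsh(2) image_comp ..
    ultimately show ?thesis using True by auto
  next
    case False
    then have AU: "A = UNIV" using AA by blast
    obtain Tsh where Tsh: "unimodular_map UNIV Tsh" "C' = Tsh ` strip 0 1"
      using strip_analysis_R[OF C'(1) C'(2)[unfolded AU] c' line'] by metis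
    have "unimodular_map A (?T0 \<circ> Tsh)" using um_comp[OF AA Tsh(1)[folded AU] T0] .
    moreover have "C = (?T0 \<circ> Tsh) ` strip 0 1" unfolding CC Tsh(2) image_comp ..
    ultimately show ?thesis using False by auto
  qed
qed



theorem proposition3p3:
  fixes A :: "real set"
  assumes "A = \<int> \<or> A = UNIV"
  defines "C0 \<equiv> (if A = \<int> then {x::real^2. -1 \<le> x $ 1 \<and> x $ 1 \<le> 1}
                            else {x::real^2. 0 \<le> x $ 1 \<and> x $ 1 \<le> 1})"
  shows "{C. closed C \<and> convex C \<and> \<not> bounded C \<and> aff_dim C = 2 \<and> maximal_free A Delta2 C}
           = {T ` C0 | T. unimodular_map A T}
         \<and> lattice_width C0 = (if A = \<int> then 2 else 1)"
proof -
  note AA = assms(1)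
  have C0: "C0 = (if A = \<int> then strip (-1) 1 else strip 0 1)" unfolding C0_def strip_def by simp
  have C0p: "closed C0" "convex C0" "\<not> bounded C0" "aff_dim C0 = 2" "maximal_free A Delta2 C0"
    using AA unfolding C0 by (auto simp: strip_closed strip_convex strip_unbounded strip_aff_dim
        strip_maxfree_Z strip_maxfree_R)
  have "{C. closed C \<and> convex C \<and> \<not> bounded C \<and> aff_dim C = 2 \<and> maximal_free A Delta2 C}
           = {T ` C0 | T. unimodular_map A T}"
  proof (rule set_eqI, rule iffI)
    fix C assume "C \<in> {C. closed C \<and> convex C \<and> \<not> bounded C \<and> aff_dim C = 2 \<and> maximal_free A Delta2 C}"
    then show "C \<in> {T ` C0 | T. unimodular_map A T}"
      using main_sub[OF AA, of C, folded C0] by blast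
  next
    fix C assume "C \<in> {T ` C0 | T. unimodular_map A T}"
    then obtain T where T: "unimodular_map A T" "C = T ` C0" by blast
    obtain S where S: "unimodular_map A S" "\<And>x. S (T x) = x" using um_inv[OF AA T(1)] by metis
    have "\<not> bounded C"
    proof
      assume "bounded C"
      then have "bounded (S ` C)" using um_bounded[OF AA S(1)] by blast
      moreover have "S ` C = C0" unfolding T(2) image_image S(2) by simp
      ultimately show False using C0p(3) by simp
    qed
    then show "C \<in> {C. closed C \<and> convex C \<and> \<not> bounded C \<and> aff_dim C = 2 \<and> maximal_free A Delta2 C}"
      unfolding T(2) using um_closed[OF AA T(1) C0p(1)] um_convex[OF AA T(1) C0p(2)]
        um_aff_dim[OF AA T(1)] C0p(4) um_maxfree[OF AA T(1) C0p(5)] T(2) by auto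
  qed
  moreover have "lattice_width C0 = (if A = \<int> then 2 else 1)"
    unfolding C0 using strip_width[of "-1" 1] strip_width[of 0 1] by simp
  ultimately show ?thesis by blast
qed


end
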